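(* Let $S,T$ be finite sets, $E\subseteq S\times T$, and for $y\in\mathbb{R}^S_+$ and $x\in\mathbb{R}^E_{+}$ define \[ \mathcal I(y;x)=\sum_{t\in T}\Big(1-\prod_{(s,t)\in E} x_{st}^{\,y(s)}\Big). \] Then for each fixed $y\ge 0$, the function $x\mapsto \mathcal I(y;x)$ is continuous submodular on the nonnegative orthant $\mathbb{R}^E_+$.
   Context: A function $g$ on a subset of $\mathbb{R}^m$ is continuous submodular if $g(x)+g(x')\ge g(x\vee x')+g(x\wedge x')$ for all $x,x'$ in its domain, where $\vee,\wedge$ are coordinatewise maximum and minimum. *)

theory Defs
  imports Complex_Main
begin

text \<open>Real power with the convention 0^0 = 1 (Isabelle's powr has 0 powr 0 = 0).\<close>
definition nnpow :: "real \<Rightarrow> real \<Rightarrow> real" where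
  "nnpow b a = (if a = 0 then 1 else b powr a)"

definition nonneg_orthant :: "'e set \<Rightarrow> ('e \<Rightarrow> real) set" where
  "nonneg_orthant E = {x. (\<forall>e\<in>E. 0 \<le> x e) \<and> (\<forall>e. e \<notin> E \<longrightarrow> x e = 0)}"

definition continuous_submodular :: "('e \<Rightarrow> real) set \<Rightarrow> (('e \<Rightarrow> real) \<Rightarrow> real) \<Rightarrow> bool" where
  "continuous_submodular D g \<longleftrightarrow>
     (\<forall>x\<in>D. \<forall>x'\<in>D. g x + g x' \<ge> g (\<lambda>e. max (x e) (x' e)) + g (\<lambda>e. min (x e) (x' e)))"

definition influence :: "'b set \<Rightarrow> ('a \<times> 'b) set \<Rightarrow> ('a \<Rightarrow> real) \<Rightarrow> ('a \<times> 'b \<Rightarrow> real) \<Rightarrow> real" where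
  "influence T E y x = (\<Sum>t\<in>T. 1 - (\<Prod>e\<in>{e\<in>E. snd e = t}. nnpow (x e) (y (fst e))))"

end

theory Submission
  imports Defs
begin

lemma prod_super:
  fixes a b :: "'i \<Rightarrow> real"
  assumes "finite A" "\<forall>i\<in>A. 0 \<le> a i \<and> 0 \<le> b i"
  shows "(\<Prod>i\<in>A. a i) + (\<Prod>i\<in>A. b i) \<le> (\<Prod>i\<in>A. max (a i) (b i)) + (\<Prod>i\<in>A. min (a i) (b i))
   \<and> (\<Prod>i\<in>A. a i) \<le> (\<Prod>i\<in>A. max (a i) (b i)) \<and> (\<Prod>i\<in>A. b i) \<le> (\<Prod>i\<in>A. max (a i) (b i))
   \<and> (\<Prod>i\<in>A. min (a i) (b i)) \<le> (\<Prod>i\<in>A. a i) \<and> (\<Prod>i\<in>A. min (a i) (b i)) \<le> (\<Prod>i\<in>A. b i)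
   \<and> 0 \<le> (\<Prod>i\<in>A. min (a i) (b i))"
  using assms
proof (induction A rule: finite_induct)
  case empty
  then show ?case by simp
next
  case (insert j F)
  define P where "P = (\<Prod>i\<in>F. a i)"
  define Q where "Q = (\<Prod>i\<in>F. b i)"
  define M where "M = (\<Prod>i\<in>F. max (a i) (b i))"
  define m where "m = (\<Prod>i\<in>F. min (a i) (b i))"
  have IH: "P + Q \<le> M + m" "P \<le> M" "Q \<le> M" "m \<le> P" "m \<le> Q" "0 \<le> m"
    using insert unfolding P_def Q_def M_def m_def by auto
  have aj: "0 \<le> a j" "0 \<le> b j" using insert by auto
  have key: "a j * P + b j * Q \<le> max (a j) (b j) * M + min (a j) (b j) * m"
  proof (cases "b j \<le> a j")
    case True
    have "a j * (M - P) \<ge> b j * (M - P)" using True IH by (simp add: mult_right_mono)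
    moreover have "b j * (M - P) + b j * (m - Q) \<ge> 0"
      using IH aj by (simp add: distrib_left[symmetric])
    ultimately have "a j * (M - P) + b j * (m - Q) \<ge> 0" by linarith
    then show ?thesis using True by (simp add: algebra_simps)
  next
    case False
    have "b j * (M - Q) \<ge> a j * (M - Q)" using False IH by (simp add: mult_right_mono)
    moreover have "a j * (M - Q) + a j * (m - P) \<ge> 0"
      using IH aj by (simp add: distrib_left[symmetric])
    ultimately have "b j * (M - Q) + a j * (m - P) \<ge> 0" by linarith
    then show ?thesis using False by (simp add: algebra_simps)
  qed
  have o1: "a j * P \<le> max (a j) (b j) * M"
    using IH aj by (intro mult_mono) auto
  have o2: "b j * Q \<le> max (a j) (b j) * M"
    using IH aj by (intro mult_mono) auto
  have o3: "min (a j) (b j) * m \<le> a j * P"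
    using IH aj by (intro mult_mono) auto
  have o4: "min (a j) (b j) * m \<le> b j * Q"
    using IH aj by (intro mult_mono) auto
  have o5: "0 \<le> min (a j) (b j) * m" using IH aj by simp
  show ?case using insert key o1 o2 o3 o4 o5
    unfolding P_def Q_def M_def m_def by simp
qed

lemma nnpow_mono: "0 \<le> c \<Longrightarrow> 0 \<le> u \<Longrightarrow> u \<le> v \<Longrightarrow> nnpow u c \<le> nnpow v c"
  unfolding nnpow_def by (auto intro: powr_mono2)

lemma nnpow_nonneg: "0 \<le> nnpow u c"
  unfolding nnpow_def by auto

lemma nnpow_max: "nnpow (max u v) c = max (nnpow u c) (nnpow v c)" if "0 \<le> c" "0 \<le> u" "0 \<le> v"
proof (cases "u \<le> v")
  case True then show ?thesis using nnpow_mono[of c u v] that by (simp add: max_def)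
next
  case False then show ?thesis using nnpow_mono[of c v u] that by (simp add: max_def)
qed

lemma nnpow_min: "nnpow (min u v) c = min (nnpow u c) (nnpow v c)" if "0 \<le> c" "0 \<le> u" "0 \<le> v"
proof (cases "u \<le> v")
  case True then show ?thesis using nnpow_mono[of c u v] that by (simp add: min_def)
next
  case False then show ?thesis using nnpow_mono[of c v u] that by (simp add: min_def)
qed

theorem corollary1:
  fixes S :: "'a set" and T :: "'b set" and E :: "('a \<times> 'b) set" and y :: "'a \<Rightarrow> real"
  assumes "finite S" and "finite T" and "E \<subseteq> S \<times> T"
    and "\<forall>s\<in>S. 0 \<le> y s"
  shows "continuous_submodular (nonneg_orthant E) (influence T E y)"
  unfolding continuous_submodular_def
proof (intro ballI)
  fix x x' assume x: "x \<in> nonneg_orthant E" and x': "x' \<in> nonneg_orthant E"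
  have finE: "finite E" using assms by (meson finite_SigmaI finite_subset)
  have trm: "(\<Prod>e\<in>{e\<in>E. snd e = t}. nnpow (x e) (y (fst e))) + (\<Prod>e\<in>{e\<in>E. snd e = t}. nnpow (x' e) (y (fst e)))
      \<le> (\<Prod>e\<in>{e\<in>E. snd e = t}. nnpow (max (x e) (x' e)) (y (fst e))) + (\<Prod>e\<in>{e\<in>E. snd e = t}. nnpow (min (x e) (x' e)) (y (fst e)))" for t
  proof -
    have ye: "\<And>e. e \<in> E \<Longrightarrow> 0 \<le> y (fst e)" using assms(3,4) by auto
    have xe: "\<And>e. e \<in> E \<Longrightarrow> 0 \<le> x e \<and> 0 \<le> x' e" using x x' unfolding nonneg_orthant_def by auto
    have eqM: "(\<Prod>e\<in>{e\<in>E. snd e = t}. nnpow (max (x e) (x' e)) (y (fst e)))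
       = (\<Prod>e\<in>{e\<in>E. snd e = t}. max (nnpow (x e) (y (fst e))) (nnpow (x' e) (y (fst e))))"
      by (rule prod.cong) (auto simp: nnpow_max ye xe)
    have eqm: "(\<Prod>e\<in>{e\<in>E. snd e = t}. nnpow (min (x e) (x' e)) (y (fst e)))
       = (\<Prod>e\<in>{e\<in>E. snd e = t}. min (nnpow (x e) (y (fst e))) (nnpow (x' e) (y (fst e))))"
      by (rule prod.cong) (auto simp: nnpow_min ye xe)
    show ?thesis unfolding eqM eqm
      using prod_super[of "{e\<in>E. snd e = t}" "\<lambda>e. nnpow (x e) (y (fst e))" "\<lambda>e. nnpow (x' e) (y (fst e))"]
        finE by (simp add: nnpow_nonneg)
  qed
  show "influence T E y (\<lambda>e. max (x e) (x' e)) + influence T E y (\<lambda>e. min (x e) (x' e))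
        \<le> influence T E y x + influence T E y x'"
    unfolding influence_def sum.distrib[symmetric]
    by (rule sum_mono) (use trm in \<open>smt (verit)\<close>)
qed

end
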